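(* If $\mathfrak W$ is a bracket pattern category, then $\bigcup_{w\in\mathfrak W}A(w)=\{\|w\|\mid w\in\mathfrak W\}$.
   Context: $\mathbb N=\{1,2,\dots\}$, $\mathbb N_0=\mathbb N\cup\{0\}$. A bracket pattern is a non-empty finite subset $w\subseteq\mathbb N$; $\|w\|:=\max(w)$. For bracket patterns $w,w'$: superposition $w\cup w'$; for $j\in w$ the projection $\cap_j w:=\{i\in w\mid i\le j\}$; the dual $w^\dagger:=\{\|w\|-i\mid i\in\mathbb N_0,\ i<\|w\|,\ i\notin w\}$. A bracket pattern category is a (possibly empty) set of bracket patterns closed under superposition, duals and projections. The completion of a bracket pattern $w$ is $A(w):=\{j-i\mid j\in w,\ i\in\mathbb N_0,\ i\notin w,\ i<j\}$. *)

theory Defs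
  imports Main
begin

definition bracket_pattern :: "nat set \<Rightarrow> bool" where
  "bracket_pattern w \<longleftrightarrow> finite w \<and> w \<noteq> {} \<and> 0 \<notin> w"

definition bnorm :: "nat set \<Rightarrow> nat" where
  "bnorm w = Max w"

definition bproj :: "nat \<Rightarrow> nat set \<Rightarrow> nat set" where
  "bproj j w = {i \<in> w. i \<le> j}"

definition bdual :: "nat set \<Rightarrow> nat set" where
  "bdual w = {bnorm w - i | i. i < bnorm w \<and> i \<notin> w}"

text \<open>Closure under duals is required whenever the dual is again a bracket
pattern, i.e. non-empty (the dual of a pattern of the form 1..n is empty).\<close>
definition bracket_pattern_category :: "nat set set \<Rightarrow> bool" where
  "bracket_pattern_category W \<longleftrightarrow>
     (\<forall>w\<in>W. bracket_pattern w) \<and>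
     (\<forall>w\<in>W. \<forall>w'\<in>W. w \<union> w' \<in> W) \<and>
     (\<forall>w\<in>W. bdual w \<noteq> {} \<longrightarrow> bdual w \<in> W) \<and>
     (\<forall>w\<in>W. \<forall>j\<in>w. bproj j w \<in> W)"

definition completion :: "nat set \<Rightarrow> nat set" where
  "completion w = {j - i | j i. j \<in> w \<and> i \<notin> w \<and> i < j}"

end

theory Submission
  imports Defs
begin

theorem proposition7p7:
  assumes "bracket_pattern_category W"
  shows "(\<Union>w\<in>W. completion w) = bnorm ` W"
proof
  show "bnorm ` W \<subseteq> (\<Union>w\<in>W. completion w)"
  proof
    fix x assume "x \<in> bnorm ` W"
    then obtain w where w: "w \<in> W" "x = bnorm w" by blast
    have bp: "bracket_pattern w" using assms w unfolding bracket_pattern_category_def by blast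
    have m: "Max w \<in> w" "0 \<notin> w" using bp unfolding bracket_pattern_def by auto
    hence "0 < Max w" by (metis neq0_conv)
    note m = m this
    hence "x \<in> completion w" unfolding completion_def w(2) bnorm_def
    proof (intro CollectI exI conjI)
      show "Max w = Max w - 0" by simp
    qed (use m in auto)
    thus "x \<in> (\<Union>w\<in>W. completion w)" using w by blast
  qed
next
  show "(\<Union>w\<in>W. completion w) \<subseteq> bnorm ` W"
  proof
    fix x assume "x \<in> (\<Union>w\<in>W. completion w)"
    then obtain w j i where w: "w \<in> W" "j \<in> w" "i \<notin> w" "i < j" "x = j - i"
      unfolding completion_def by blast
    have fw: "finite w" using assms w unfolding bracket_pattern_category_def bracket_pattern_def by blast
    define p where "p = bproj j w"
    have pW: "p \<in> W" using assms w unfolding bracket_pattern_category_def p_def by blast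
    have fp: "finite p" using fw unfolding p_def bproj_def by simp
    have np: "bnorm p = j" unfolding bnorm_def
      by (rule Max_eqI) (use fp w in \<open>auto simp: p_def bproj_def\<close>)
    define d where "d = bdual p"
    have dd: "d = (\<lambda>k. j - k) ` {k. k < j \<and> k \<notin> p}" unfolding d_def bdual_def np by blast
    have xd: "x \<in> d" unfolding dd using w by (auto simp: p_def bproj_def)
    have fd: "finite d" unfolding dd by simp
    have dW: "d \<in> W" using assms pW xd unfolding bracket_pattern_category_def d_def by blast
    define q where "q = bproj x d"
    have qW: "q \<in> W" using assms dW xd unfolding bracket_pattern_category_def q_def by blast
    have "bnorm q = x" unfolding bnorm_def
      by (rule Max_eqI) (use fd xd in \<open>auto simp: q_def bproj_def\<close>)
    thus "x \<in> bnorm ` W" using qW by force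
  qed
qed

end
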